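(* Let $(A,\leq,\cdot,/)$ be a right-residuated magma satisfying condition (N). (1) If $(A,\leq)$ has a bottom element $0$, then $0/0$ is the top element of $(A,\leq)$. (2) If $(A,\leq)$ has a top element $\top$, then: (i) $A$ is unital, i.e. $x/x=y/y$ for all $x,y$ (in fact $x/x=\top$ and $\top x = x$ for all $x$); (ii) for all $x,y\in A$, $x\sqcap y\leq x$ and $x\sqcap y\leq y$; (iii) if moreover $A$ is finite, then $(A,\leq)$ has a bottom element.
   Context: Write $xy$ for $x\cdot y$; $\cdot$ binds more strongly than $/$, and $/$ binds more strongly than $\sqcap$, where $x\sqcap y := (x/y)y$. A right-residuated magma is a structure $(A,\leq,\cdot,/)$ where $(A,\leq)$ is a poset and $xy\leq z\iff x\leq z/y$ for all $x,y,z\in A$. Condition (N): for all $x,y\in A$, $x\leq y\iff x = y\sqcap x$. *)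

theory Defs
  imports Main
begin

definition right_residuated_magma ::
  "('a::order \<Rightarrow> 'a \<Rightarrow> 'a) \<Rightarrow> ('a \<Rightarrow> 'a \<Rightarrow> 'a) \<Rightarrow> bool" where
  "right_residuated_magma mult rdiv \<longleftrightarrow>
     (\<forall>x y z. mult x y \<le> z \<longleftrightarrow> x \<le> rdiv z y)"

definition rmeet :: "('a \<Rightarrow> 'a \<Rightarrow> 'a) \<Rightarrow> ('a \<Rightarrow> 'a \<Rightarrow> 'a) \<Rightarrow> 'a \<Rightarrow> 'a \<Rightarrow> 'a" where
  "rmeet mult rdiv x y = mult (rdiv x y) y"

definition condN :: "('a::order \<Rightarrow> 'a \<Rightarrow> 'a) \<Rightarrow> ('a \<Rightarrow> 'a \<Rightarrow> 'a) \<Rightarrow> bool" where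
  "condN mult rdiv \<longleftrightarrow> (\<forall>x y. x \<le> y \<longleftrightarrow> x = rmeet mult rdiv y x)"

end

theory Submission
  imports Defs
begin

lemma lowerbound_finite:
  fixes S :: "'a::order set"
  assumes "finite S" and t: "\<forall>x::'a. x \<le> t"
    and lb: "\<And>x y::'a. g x y \<le> x \<and> g x y \<le> y"
  shows "\<exists>b. \<forall>x\<in>S. b \<le> x"
  using assms(1)
proof (induction S rule: finite_induct)
  case empty then show ?case by auto
next
  case (insert a S)
  then obtain b where b: "\<forall>x\<in>S. b \<le> x" by blast
  have "\<forall>x\<in>insert a S. g a b \<le> x"
    using b lb[of a b] order_trans by blast
  then show ?case by blast
qed

theorem mainTheorem11:
  fixes mult :: "'a::order \<Rightarrow> 'a \<Rightarrow> 'a" and rdiv :: "'a \<Rightarrow> 'a \<Rightarrow> 'a"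
  assumes "right_residuated_magma mult rdiv"
    and "condN mult rdiv"
  shows "(\<forall>b. (\<forall>x. b \<le> x) \<longrightarrow> (\<forall>x. x \<le> rdiv b b))
    \<and> (\<forall>t. (\<forall>x. x \<le> t) \<longrightarrow>
          (\<forall>x y. rdiv x x = rdiv y y)
        \<and> (\<forall>x. rdiv x x = t \<and> mult t x = x)
        \<and> (\<forall>x y. rmeet mult rdiv x y \<le> x \<and> rmeet mult rdiv x y \<le> y)
        \<and> (finite (UNIV :: 'a set) \<longrightarrow> (\<exists>b::'a. \<forall>x. b \<le> x)))"
proof -
  have R: "\<And>x y z. mult x y \<le> z \<longleftrightarrow> x \<le> rdiv z y"
    using assms(1) unfolding right_residuated_magma_def by blast
  have N: "\<And>x y. x \<le> y \<longleftrightarrow> x = mult (rdiv y x) x"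
    using assms(2) unfolding condN_def rmeet_def by blast
  have mono: "\<And>x x' y. x \<le> x' \<Longrightarrow> mult x y \<le> mult x' y"
    by (meson R order_refl order_trans)
  have P1: "\<forall>b. (\<forall>x. b \<le> x) \<longrightarrow> (\<forall>x. x \<le> rdiv b b)"
  proof (intro allI impI)
    fix b x :: 'a assume b: "\<forall>x. b \<le> x"
    have "x \<le> rdiv (mult x b) b" using R by blast
    hence "mult x b \<le> mult (rdiv (mult x b) b) b" by (rule mono)
    also have "\<dots> = b" using N b by metis
    finally show "x \<le> rdiv b b" using R by blast
  qed
  have P2: "\<forall>t. (\<forall>x. x \<le> t) \<longrightarrow>
          (\<forall>x y. rdiv x x = rdiv y y)
        \<and> (\<forall>x. rdiv x x = t \<and> mult t x = x)
        \<and> (\<forall>x y. rmeet mult rdiv x y \<le> x \<and> rmeet mult rdiv x y \<le> y)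
        \<and> (finite (UNIV :: 'a set) \<longrightarrow> (\<exists>b::'a. \<forall>x. b \<le> x))"
  proof (intro allI impI)
    fix t :: 'a assume t: "\<forall>x. x \<le> t"
    have tx: "\<And>x. mult t x = x"
    proof -
      fix x :: 'a
      have "rdiv t x = t"
        using t R by (meson order.antisym)
      thus "mult t x = x" using N t by metis
    qed
    have dd: "\<And>x. rdiv x x = t"
      using t R tx by (metis order.antisym order_refl)
    have lb: "\<And>x y. rmeet mult rdiv x y \<le> x \<and> rmeet mult rdiv x y \<le> y"
      unfolding rmeet_def using R mono t tx by (metis order_refl)
    have fin: "finite (UNIV :: 'a set) \<longrightarrow> (\<exists>b::'a. \<forall>x. b \<le> x)"
      using lowerbound_finite[of UNIV t "rmeet mult rdiv", OF _ t lb] by blast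
    show "(\<forall>x y. rdiv x x = rdiv y y)
        \<and> (\<forall>x. rdiv x x = t \<and> mult t x = x)
        \<and> (\<forall>x y. rmeet mult rdiv x y \<le> x \<and> rmeet mult rdiv x y \<le> y)
        \<and> (finite (UNIV :: 'a set) \<longrightarrow> (\<exists>b::'a. \<forall>x. b \<le> x))"
      using dd tx lb fin by simp
  qed
  show ?thesis using P1 P2 by blast
qed

end
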